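(* Let $g:\mathbb{C}\to\mathbb{C}$ be holomorphic at $0$ with $g(0)=0$ and $g'(0)\neq 0$, and let $\varphi:\mathbb{N}\to\mathbb{C}\setminus\{0\}$. Let $(P_n(x))_{n\ge 0}$ be a sequence of Appell polynomials of type $(g,\varphi)$ with generating function $f$, i.e. $f$ is holomorphic at $0$, $f(0)\neq 0$, and $$\sum_{n\ge 0}P_n(x)\frac{t^n}{\varphi(0)\varphi(1)\cdots\varphi(n)}=f(t)e^{x g(t)}$$ for all $x$ and all $t$ near $0$. Then $P_n(-x)=(-1)^nP_n(x)$ for all $n\ge0$ and all $x$ if and only if $g$ is odd and $f$ is even.
   Context: Here $\mathbb{N}=\{0,1,2,\dots\}$. A sequence of Appell polynomials of type $(g,\varphi)$ is a sequence of polynomials for which some $f$ holomorphic at $0$ with $f(0)\ne0$ satisfies the displayed identity. *)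

theory Defs
  imports "HOL-Complex_Analysis.Complex_Analysis" "HOL-Computational_Algebra.Polynomial"
begin

end

theory Submission
  imports Defs
begin

lemma powser_unique0:
  fixes d :: "nat \<Rightarrow> complex"
  assumes "\<forall>\<^sub>F t in nhds 0. (\<lambda>n. d n * t^n) sums 0"
  shows "d m = 0"
proof (rule ccontr)
  assume nz: "d m \<noteq> 0"
  obtain r where r: "r > 0" and hr: "\<And>t. dist t 0 < r \<Longrightarrow> (\<lambda>n. d n * t^n) sums 0"
    using assms unfolding eventually_nhds_metric by blast
  have sm: "\<And>x. norm (x - 0) < r \<Longrightarrow> (\<lambda>n. d n * (x - 0) ^ n) sums ((\<lambda>_. 0::complex) x)"
    using hr by (simp add: dist_norm)
  define z0 where "z0 = (\<lambda>_::complex. 0::complex)"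
  have sm': "\<And>x. norm (x - 0) < r \<Longrightarrow> (\<lambda>n. d n * (x - 0) ^ n) sums (z0 x)"
    using sm by (simp add: z0_def)
  have f00: "z0 0 = 0" by (simp add: z0_def)
  show False
  proof (cases "m = 0")
    case True
    have "(\<lambda>n. d n * 0 ^ n) sums 0" using hr[of 0] r by simp
    then have "d 0 = 0" by simp
    then show False using nz True by simp
  next
    case False
    then obtain s where s: "0 < s" "\<And>z. z \<in> cball 0 s - {0} \<Longrightarrow> z0 z \<noteq> 0"
      using powser_0_nonzero[OF r sm' f00 nz] False by blast
    have "(of_real s :: complex) \<in> cball 0 s - {0}" using s by auto
    then have "z0 (of_real s) \<noteq> 0" by (rule s(2))
    then show False by (simp add: z0_def)
  qed
qed

lemma eventually_nhds0_neg:
  fixes P :: "complex \<Rightarrow> bool"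
  assumes "\<forall>\<^sub>F t in nhds 0. P t"
  shows "\<forall>\<^sub>F t in nhds 0. P (- t)"
proof -
  obtain r where r: "r > 0" and hr: "\<And>t. dist t 0 < r \<Longrightarrow> P t"
    using assms unfolding eventually_nhds_metric by blast
  show ?thesis unfolding eventually_nhds_metric
    using r hr by (intro exI[of _ r]) (auto simp: dist_norm)
qed

lemma series_neg: "(\<lambda>n. a n * (-t) ^ n / c n) = (\<lambda>n. ((-1)^n * a n / c n) * (t::complex) ^ n)"
  by (rule ext) (simp add: power_minus[of t])

lemma isCont_an: "f analytic_on {0} \<Longrightarrow> isCont f (0::complex)"
  by (simp add: analytic_at_imp_isCont)

theorem mainTheorem2:
  fixes g f :: "complex \<Rightarrow> complex"
    and \<phi> :: "nat \<Rightarrow> complex"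
    and P :: "nat \<Rightarrow> complex poly"
  assumes g_hol: "g analytic_on {0}"
    and g0: "g 0 = 0"
    and g'0: "deriv g 0 \<noteq> 0"
    and \<phi>_nz: "\<And>n. \<phi> n \<noteq> 0"
    and f_hol: "f analytic_on {0}"
    and f0: "f 0 \<noteq> 0"
    and gen: "\<And>x. \<forall>\<^sub>F t in nhds 0.
               (\<lambda>n. poly (P n) x * t ^ n / (\<Prod>k\<le>n. \<phi> k)) sums (f t * exp (x * g t))"
  shows "(\<forall>n x. poly (P n) (- x) = (-1) ^ n * poly (P n) x) \<longleftrightarrow>
         ((\<forall>\<^sub>F t in nhds 0. g (- t) = - g t) \<and> (\<forall>\<^sub>F t in nhds 0. f (- t) = f t))"
proof
  define c where "c n = (\<Prod>k\<le>n. \<phi> k)" for n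
  have cnz: "c n \<noteq> 0" for n using \<phi>_nz by (simp add: c_def)
  assume H: "\<forall>n x. poly (P n) (- x) = (-1) ^ n * poly (P n) x"
  have key: "\<forall>\<^sub>F t in nhds 0. f t * exp (- x * g t) = f (- t) * exp (x * g (- t))" for x
  proof -
    have E1: "\<forall>\<^sub>F t in nhds 0. (\<lambda>n. poly (P n) (-x) * t ^ n / c n) sums (f t * exp (-x * g t))"
      using gen[of "-x"] by (simp add: c_def)
    have E2: "\<forall>\<^sub>F t in nhds 0. (\<lambda>n. poly (P n) x * (-t) ^ n / c n) sums (f (-t) * exp (x * g (-t)))"
      using eventually_nhds0_neg[OF gen[of x]] by (simp add: c_def)
    show ?thesis
    proof (rule eventually_mono[OF eventually_conj[OF E1 E2]])
      fix t assume "(\<lambda>n. poly (P n) (-x) * t ^ n / c n) sums (f t * exp (-x * g t)) \<and>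
          (\<lambda>n. poly (P n) x * (-t) ^ n / c n) sums (f (-t) * exp (x * g (-t)))"
      moreover have "(\<lambda>n. poly (P n) (-x) * t ^ n / c n) = (\<lambda>n. poly (P n) x * (-t) ^ n / c n)"
        using H by (auto simp: power_minus[of t])
      ultimately show "f t * exp (- x * g t) = f (- t) * exp (x * g (- t))"
        using sums_unique2 by metis
    qed
  qed
  have feven: "\<forall>\<^sub>F t in nhds 0. f (- t) = f t"
    using key[of 0] by (auto elim: eventually_mono)
  have fc: "isCont f 0" using f_hol by (rule isCont_an)
  have gc: "isCont g 0" using g_hol by (rule isCont_an)
  have fnz: "\<forall>\<^sub>F t in nhds 0. f t \<noteq> 0"
  proof -
    have "(f \<longlongrightarrow> f 0) (nhds 0)" using fc by (simp add: tendsto_at_iff_tendsto_nhds isCont_def)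
    then have "((\<lambda>t. norm (f t - f 0)) \<longlongrightarrow> norm (f 0 - f 0)) (nhds 0)"
      by (intro tendsto_intros)
    then have "\<forall>\<^sub>F t in nhds 0. norm (f t - f 0) < norm (f 0)"
      using f0 by (intro order_tendstoD(2)) auto
    then show ?thesis by (rule eventually_mono) (metis diff_zero norm_minus_commute order_less_irrefl)
  qed
  have hc: "isCont (\<lambda>t. g t + g (- t)) 0"
  proof -
    have "isCont (\<lambda>t. g (- t)) 0" using isCont_o2[where f="\<lambda>t. -t" and a=0 and g=g] gc by simp
    then show ?thesis using gc by (intro continuous_add)
  qed
  have hsmall: "\<forall>\<^sub>F t in nhds 0. norm (g t + g (- t)) < 2 * pi"
  proof -
    have "((\<lambda>t. g t + g (- t)) \<longlongrightarrow> g 0 + g (- 0)) (nhds 0)"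
      using hc tendsto_at_iff_tendsto_nhds[of "\<lambda>t. g t + g (- t)" 0] unfolding isCont_def by simp
    then have "((\<lambda>t. norm (g t + g (- t))) \<longlongrightarrow> norm (g 0 + g (- 0))) (nhds 0)"
      by (rule tendsto_norm)
    then show ?thesis using g0 pi_gt_zero by (intro order_tendstoD(2)) auto
  qed
  have "\<forall>\<^sub>F t in nhds 0. g (- t) = - g t"
  proof (rule eventually_mono[OF eventually_conj[OF eventually_conj[OF key[of 1] fnz] eventually_conj[OF hsmall feven]]])
    fix t assume A: "(f t * exp (- 1 * g t) = f (- t) * exp (1 * g (- t)) \<and> f t \<noteq> 0) \<and>
       norm (g t + g (- t)) < 2 * pi \<and> f (- t) = f t"
    then have "f t * exp (- g t) = f t * exp (g (- t))" by simp
    then have "exp (- g t) = exp (g (- t))" using A by simp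
    then have "exp (g t + g (- t)) = exp (g t) * exp (- g t)" by (simp add: exp_add)
    then have "exp (g t + g (- t)) = 1" by (simp add: exp_minus_inverse)
    then obtain n :: int where n: "Re (g t + g (- t)) = 0" "Im (g t + g (- t)) = of_int (2 * n) * pi"
      by (auto simp: exp_eq_1)
    have "\<bar>Im (g t + g (- t))\<bar> < 2 * pi" using A abs_Im_le_cmod le_less_trans by blast
    then have "\<bar>of_int n\<bar> * (2 * pi) < 1 * (2 * pi)" using n(2) by (simp add: abs_mult)
    then have "\<bar>of_int n :: real\<bar> < 1" using pi_gt_zero by (meson mult_less_cancel_right_pos zero_less_mult_iff zero_less_numeral)
    then have "n = 0" by linarith
    then have "g t + g (- t) = 0" using n by (simp add: complex_eq_iff)
    then show "g (- t) = - g t" by (simp add: add_eq_0_iff)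
  qed
  then show "(\<forall>\<^sub>F t in nhds 0. g (- t) = - g t) \<and> (\<forall>\<^sub>F t in nhds 0. f (- t) = f t)"
    using feven by blast
next
  define c where "c n = (\<Prod>k\<le>n. \<phi> k)" for n
  have cnz: "c n \<noteq> 0" for n using \<phi>_nz by (simp add: c_def)
  assume A: "(\<forall>\<^sub>F t in nhds 0. g (- t) = - g t) \<and> (\<forall>\<^sub>F t in nhds 0. f (- t) = f t)"
  show "\<forall>n x. poly (P n) (- x) = (-1) ^ n * poly (P n) x"
  proof (intro allI)
    fix n x
    have E1: "\<forall>\<^sub>F t in nhds 0. (\<lambda>n. (poly (P n) (-x) / c n) * t ^ n) sums (f t * exp (-x * g t))"
      using gen[of "-x"] by (simp add: c_def)
    have E2: "\<forall>\<^sub>F t in nhds 0. (\<lambda>n. ((-1)^n * poly (P n) x / c n) * t ^ n) sums (f (-t) * exp (x * g (-t)))"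
      using eventually_nhds0_neg[OF gen[of x]] by (simp only: c_def[symmetric] series_neg)
    have "\<forall>\<^sub>F t in nhds 0. (\<lambda>n. (poly (P n) (-x) / c n - (-1)^n * poly (P n) x / c n) * t ^ n) sums 0"
    proof (rule eventually_mono[OF eventually_conj[OF eventually_conj[OF E1 E2] eventually_conj[OF conjunct1[OF A] conjunct2[OF A]]]])
      fix t assume B: "((\<lambda>n. (poly (P n) (-x) / c n) * t ^ n) sums (f t * exp (-x * g t)) \<and>
        (\<lambda>n. ((-1)^n * poly (P n) x / c n) * t ^ n) sums (f (-t) * exp (x * g (-t)))) \<and>
        g (- t) = - g t \<and> f (- t) = f t"
      have e: "f (-t) * exp (x * g (-t)) = f t * exp (-x * g t)" using B by simp
      have "(\<lambda>n. ((-1)^n * poly (P n) x / c n) * t ^ n) sums (f t * exp (-x * g t))"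
        using conjunct2[OF conjunct1[OF B]] unfolding e .
      from sums_diff[OF conjunct1[OF conjunct1[OF B]] this]
      show "(\<lambda>n. (poly (P n) (-x) / c n - (-1)^n * poly (P n) x / c n) * t ^ n) sums 0"
        by (simp add: algebra_simps)
    qed
    from powser_unique0[OF this, of n]
    show "poly (P n) (- x) = (-1) ^ n * poly (P n) x"
      using cnz[of n] by (simp add: divide_simps)
  qed
qed

end
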